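(* Let $K$ be a field and let $C=[A\xrightarrow{u}B]$, $C'=[A'\xrightarrow{u'}B']$ be complexes of commutative group schemes over $K$. Let $P$ be a biextension of $(B,B')$ by $\mathbb G_m$, and let $\Sigma:(A\times A')\times P\to P$ be an $A\times A'$-linearization of $P$. Suppose that $u(K):A(K)\to B(K)$ and $u'(K):A'(K)\to B'(K)$ are injective. Then $\Sigma$ induces a quotient biextension $Q(K)$ of $(B(K)/A(K),\,B'(K)/A'(K))$ by $K^*$; namely, the set $Q(K)$ of orbits $[x]=\{\Sigma(a,a',x): a\in A(K),a'\in A'(K)\}$ of elements $x\in P(K)$ carries, via the projection, $K^*$-action and partial group laws induced from $P(K)$, the structure of a biextension of $(B(K)/A(K),\,B'(K)/A'(K))$ by $K^*$.
   Context: Here $B(K)/A(K)$ means $B(K)/u(A(K))$ and similarly for $B'(K)/A'(K)$. For a biextension $P$ of $(B,B')$ by $\mathbb G_m$, $+_1$ denotes the group law on the fibers $P_{b,B'}$ over $\{b\}\times B'$ and $+_2$ the group law on the fibers $P_{B,b'}$ over $B\times\{b'\}$. Let $\sigma:A\times B\to B$, $(a,b)\mapsto u(a)+b$, and $\sigma':A'\times B'\to B'$, $(a',b')\mapsto u'(a')+b'$. An $A\times A'$-linearization of $P$ is an action $\Sigma:(A\times A')\times P\to P$ of the group $A\times A'$ on $P$ such that: (i) $\Sigma(a,a',c+x)=c+\Sigma(a,a',x)$ for $c\in\mathbb G_m$; (ii) if $x$ lies above $(b,b')$ then $\Sigma(a,a',x)$ lies above $(\sigma(a,b),\sigma'(a',b'))$;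 (iii) for $a\in A$, $a'_1,a'_2\in A'$ and $x_1,x_2$ above the same $b\in B$, $\Sigma(a,a'_1+a'_2,x_1+_1x_2)=\Sigma(a,a'_1,x_1)+_1\Sigma(a,a'_2,x_2)$, and for $a_1,a_2\in A$, $a'\in A'$ and $x_1,x_2$ above the same $b'\in B'$, $\Sigma(a_1+a_2,a',x_1+_2x_2)=\Sigma(a_1,a',x_1)+_2\Sigma(a_2,a',x_2)$. A biextension of abelian groups $(X,Y)$ by $H$ is a set $Q$ with a surjection onto $X\times Y$, a free $H$-action transitive on fibers, and partial group laws on the fibers over $\{x\}\times Y$ and over $X\times\{y\}$ making them extensions of $Y$ (resp. $X$) by $H$, compatible in the usual sense (Mumford/Grothendieck). *)

theory Defs
  imports "HOL-Algebra.Algebra"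
begin

text \<open>All objects are taken at the level of K-points. Group laws of the
commutative groups (written additively in the paper) are written
multiplicatively, as in HOL-Algebra.\<close>

definition Kstar :: "'k::field monoid" where
  "Kstar = \<lparr>carrier = {c. c \<noteq> 0}, monoid.mult = (*), one = 1\<rparr>"

definition group_ext ::
  "('h, 'm1) monoid_scheme \<Rightarrow> ('g, 'm2) monoid_scheme \<Rightarrow> ('y, 'm3) monoid_scheme
   \<Rightarrow> ('g \<Rightarrow> 'y) \<Rightarrow> ('h \<Rightarrow> 'g \<Rightarrow> 'g) \<Rightarrow> bool" where
  "group_ext H G GY p act \<longleftrightarrow>
     comm_group G \<and> p \<in> hom G GY \<and> p ` carrier G = carrier GY \<and>
     (\<lambda>h. act h \<one>\<^bsub>G\<^esub>) \<in> hom H G \<and>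
     inj_on (\<lambda>h. act h \<one>\<^bsub>G\<^esub>) (carrier H) \<and>
     (\<lambda>h. act h \<one>\<^bsub>G\<^esub>) ` carrier H = kernel G GY p \<and>
     (\<forall>h\<in>carrier H. \<forall>g\<in>carrier G. act h g = act h \<one>\<^bsub>G\<^esub> \<otimes>\<^bsub>G\<^esub> g)"

definition biext ::
  "('x, 'm1) monoid_scheme \<Rightarrow> ('y, 'm2) monoid_scheme \<Rightarrow> ('h, 'm3) monoid_scheme
   \<Rightarrow> 'q set \<Rightarrow> ('q \<Rightarrow> 'x \<times> 'y) \<Rightarrow> ('h \<Rightarrow> 'q \<Rightarrow> 'q)
   \<Rightarrow> ('q \<Rightarrow> 'q \<Rightarrow> 'q) \<Rightarrow> ('q \<Rightarrow> 'q \<Rightarrow> 'q) \<Rightarrow> bool" where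
  "biext GX GY H Q pr act add1 add2 \<longleftrightarrow>
     comm_group GX \<and> comm_group GY \<and> comm_group H \<and>
     pr ` Q = carrier GX \<times> carrier GY \<and>
     (\<forall>h\<in>carrier H. \<forall>q\<in>Q. act h q \<in> Q \<and> pr (act h q) = pr q) \<and>
     (\<forall>q\<in>Q. act \<one>\<^bsub>H\<^esub> q = q) \<and>
     (\<forall>h\<in>carrier H. \<forall>k\<in>carrier H. \<forall>q\<in>Q. act (h \<otimes>\<^bsub>H\<^esub> k) q = act h (act k q)) \<and>
     (\<forall>h\<in>carrier H. \<forall>q\<in>Q. act h q = q \<longrightarrow> h = \<one>\<^bsub>H\<^esub>) \<and>
     (\<forall>q\<in>Q. \<forall>q'\<in>Q. pr q = pr q' \<longrightarrow> (\<exists>h\<in>carrier H. q' = act h q)) \<and>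
     (\<forall>x\<in>carrier GX. \<exists>e.
        group_ext H \<lparr>carrier = {q\<in>Q. fst (pr q) = x}, monoid.mult = add1, one = e\<rparr>
                  GY (\<lambda>q. snd (pr q)) act) \<and>
     (\<forall>y\<in>carrier GY. \<exists>e.
        group_ext H \<lparr>carrier = {q\<in>Q. snd (pr q) = y}, monoid.mult = add2, one = e\<rparr>
                  GX (\<lambda>q. fst (pr q)) act) \<and>
     (\<forall>q11\<in>Q. \<forall>q12\<in>Q. \<forall>q21\<in>Q. \<forall>q22\<in>Q.
        fst (pr q11) = fst (pr q12) \<and> fst (pr q21) = fst (pr q22) \<and>
        snd (pr q11) = snd (pr q21) \<and> snd (pr q12) = snd (pr q22) \<longrightarrow>
        add2 (add1 q11 q12) (add1 q21 q22) = add1 (add2 q11 q21) (add2 q12 q22))"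

definition linearization ::
  "('a, 'm1) monoid_scheme \<Rightarrow> ('c, 'm2) monoid_scheme \<Rightarrow>
   ('b, 'm3) monoid_scheme \<Rightarrow> ('d, 'm4) monoid_scheme \<Rightarrow>
   ('a \<Rightarrow> 'b) \<Rightarrow> ('c \<Rightarrow> 'd) \<Rightarrow> ('h, 'm5) monoid_scheme \<Rightarrow>
   'p set \<Rightarrow> ('p \<Rightarrow> 'b \<times> 'd) \<Rightarrow> ('h \<Rightarrow> 'p \<Rightarrow> 'p) \<Rightarrow>
   ('p \<Rightarrow> 'p \<Rightarrow> 'p) \<Rightarrow> ('p \<Rightarrow> 'p \<Rightarrow> 'p) \<Rightarrow> ('a \<Rightarrow> 'c \<Rightarrow> 'p \<Rightarrow> 'p) \<Rightarrow> bool" where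
  "linearization A A' B B' u u' H P pr act add1 add2 \<Sigma> \<longleftrightarrow>
     \<comment> \<open>\<Sigma> is an action of the group A \<times> A' on P\<close>
     (\<forall>a\<in>carrier A. \<forall>a'\<in>carrier A'. \<forall>x\<in>P. \<Sigma> a a' x \<in> P) \<and>
     (\<forall>x\<in>P. \<Sigma> \<one>\<^bsub>A\<^esub> \<one>\<^bsub>A'\<^esub> x = x) \<and>
     (\<forall>a1\<in>carrier A. \<forall>a2\<in>carrier A. \<forall>a1'\<in>carrier A'. \<forall>a2'\<in>carrier A'. \<forall>x\<in>P.
        \<Sigma> (a1 \<otimes>\<^bsub>A\<^esub> a2) (a1' \<otimes>\<^bsub>A'\<^esub> a2') x = \<Sigma> a1 a1' (\<Sigma> a2 a2' x)) \<and>
     \<comment> \<open>(i)\<close>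
     (\<forall>a\<in>carrier A. \<forall>a'\<in>carrier A'. \<forall>c\<in>carrier H. \<forall>x\<in>P.
        \<Sigma> a a' (act c x) = act c (\<Sigma> a a' x)) \<and>
     \<comment> \<open>(ii)\<close>
     (\<forall>a\<in>carrier A. \<forall>a'\<in>carrier A'. \<forall>x\<in>P.
        pr (\<Sigma> a a' x) = (u a \<otimes>\<^bsub>B\<^esub> fst (pr x), u' a' \<otimes>\<^bsub>B'\<^esub> snd (pr x))) \<and>
     \<comment> \<open>(iii)\<close>
     (\<forall>a\<in>carrier A. \<forall>a1'\<in>carrier A'. \<forall>a2'\<in>carrier A'. \<forall>x1\<in>P. \<forall>x2\<in>P.
        fst (pr x1) = fst (pr x2) \<longrightarrow>
        \<Sigma> a (a1' \<otimes>\<^bsub>A'\<^esub> a2') (add1 x1 x2) = add1 (\<Sigma> a a1' x1) (\<Sigma> a a2' x2)) \<and>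
     (\<forall>a1\<in>carrier A. \<forall>a2\<in>carrier A. \<forall>a'\<in>carrier A'. \<forall>x1\<in>P. \<forall>x2\<in>P.
        snd (pr x1) = snd (pr x2) \<longrightarrow>
        \<Sigma> (a1 \<otimes>\<^bsub>A\<^esub> a2) a' (add2 x1 x2) = add2 (\<Sigma> a1 a' x1) (\<Sigma> a2 a' x2))"

definition lin_orbit ::
  "('a, 'm1) monoid_scheme \<Rightarrow> ('c, 'm2) monoid_scheme \<Rightarrow> ('a \<Rightarrow> 'c \<Rightarrow> 'p \<Rightarrow> 'p) \<Rightarrow> 'p \<Rightarrow> 'p set" where
  "lin_orbit A A' \<Sigma> x = {\<Sigma> a a' x | a a'. a \<in> carrier A \<and> a' \<in> carrier A'}"

end

theory Submission
  imports Defs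
begin



lemma comm_group_Kstar: "comm_group (Kstar :: 'k::field monoid)"
proof (rule comm_groupI)
  fix x :: 'k assume "x \<in> carrier Kstar"
  then show "\<exists>y\<in>carrier Kstar. y \<otimes>\<^bsub>Kstar\<^esub> x = \<one>\<^bsub>Kstar\<^esub>"
    by (intro bexI[of _ "inverse x"]) (auto simp: Kstar_def)
qed (auto simp: Kstar_def)

definition "repQ A A' \<Sigma> P q = (SOME x. x \<in> P \<and> lin_orbit A A' \<Sigma> x = q)"
definition "prQf A A' B B' u u' \<Sigma> P pr q =
   (u ` carrier A #>\<^bsub>B\<^esub> fst (pr (repQ A A' \<Sigma> P q)),
    u' ` carrier A' #>\<^bsub>B'\<^esub> snd (pr (repQ A A' \<Sigma> P q)))"
definition "actQf A A' \<Sigma> P act c q = lin_orbit A A' \<Sigma> (act c (repQ A A' \<Sigma> P q))"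
definition "addQf A A' \<Sigma> P pr ad q1 q2 =
   (let xy = (SOME xy. fst xy \<in> P \<and> snd xy \<in> P \<and> lin_orbit A A' \<Sigma> (fst xy) = q1 \<and>
                 lin_orbit A A' \<Sigma> (snd xy) = q2 \<and> fst (pr (fst xy)) = fst (pr (snd xy)))
    in lin_orbit A A' \<Sigma> (ad (fst xy) (snd xy)))"

lemma lin_orbit_swap: "lin_orbit A' A (\<lambda>a' a. \<Sigma> a a') = lin_orbit A A' \<Sigma>"
  unfolding lin_orbit_def by (intro ext) auto

lemma repQ_swap: "repQ A' A (\<lambda>a' a. \<Sigma> a a') P q = repQ A A' \<Sigma> P q"
  unfolding repQ_def by (subst lin_orbit_swap) (rule refl)

locale qs =
  fixes A :: "'a monoid" and B :: "'b monoid" and A' :: "'c monoid" and B' :: "'d monoid"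
    and u :: "'a \<Rightarrow> 'b" and u' :: "'c \<Rightarrow> 'd"
    and P :: "'p set" and pr :: "'p \<Rightarrow> 'b \<times> 'd"
    and act :: "'k::field \<Rightarrow> 'p \<Rightarrow> 'p"
    and add1 add2 :: "'p \<Rightarrow> 'p \<Rightarrow> 'p"
    and \<Sigma> :: "'a \<Rightarrow> 'c \<Rightarrow> 'p \<Rightarrow> 'p"
  assumes cA: "comm_group A" and cB: "comm_group B" and cA': "comm_group A'" and cB': "comm_group B'"
    and hu: "u \<in> hom A B" and hu': "u' \<in> hom A' B'"
    and bx: "biext B B' (Kstar :: 'k monoid) P pr act add1 add2"
    and lin: "linearization A A' B B' u u' (Kstar :: 'k monoid) P pr act add1 add2 \<Sigma>"
    and iu: "inj_on u (carrier A)" and iu': "inj_on u' (carrier A')"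
begin

abbreviation "Orb \<equiv> lin_orbit A A' \<Sigma>"
abbreviation "N \<equiv> u ` carrier A"
abbreviation "N' \<equiv> u' ` carrier A'"

sublocale A: comm_group A by (rule cA)
sublocale B: comm_group B by (rule cB)
sublocale A': comm_group A' by (rule cA')
sublocale B': comm_group B' by (rule cB')

lemma S_closed: "a \<in> carrier A \<Longrightarrow> a' \<in> carrier A' \<Longrightarrow> x \<in> P \<Longrightarrow> \<Sigma> a a' x \<in> P"
  using lin[unfolded linearization_def, THEN conjunct1] by blast
lemma S_one: "x \<in> P \<Longrightarrow> \<Sigma> \<one>\<^bsub>A\<^esub> \<one>\<^bsub>A'\<^esub> x = x"
  using lin[unfolded linearization_def, THEN conjunct2, THEN conjunct1] by blast
lemma S_mult: "a1 \<in> carrier A \<Longrightarrow> a2 \<in> carrier A \<Longrightarrow> a1' \<in> carrier A' \<Longrightarrow> a2' \<in> carrier A' \<Longrightarrow> x \<in> P \<Longrightarrow>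
        \<Sigma> (a1 \<otimes>\<^bsub>A\<^esub> a2) (a1' \<otimes>\<^bsub>A'\<^esub> a2') x = \<Sigma> a1 a1' (\<Sigma> a2 a2' x)"
  using lin[unfolded linearization_def, THEN conjunct2, THEN conjunct2, THEN conjunct1] by blast
lemma S_act: "a \<in> carrier A \<Longrightarrow> a' \<in> carrier A' \<Longrightarrow> c \<in> carrier Kstar \<Longrightarrow> x \<in> P \<Longrightarrow>
        \<Sigma> a a' (act c x) = act c (\<Sigma> a a' x)"
  using lin[unfolded linearization_def, THEN conjunct2, THEN conjunct2, THEN conjunct2, THEN conjunct1] by blast
lemma S_pr: "a \<in> carrier A \<Longrightarrow> a' \<in> carrier A' \<Longrightarrow> x \<in> P \<Longrightarrow>
        pr (\<Sigma> a a' x) = (u a \<otimes>\<^bsub>B\<^esub> fst (pr x), u' a' \<otimes>\<^bsub>B'\<^esub> snd (pr x))"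
  using lin[unfolded linearization_def, THEN conjunct2, THEN conjunct2, THEN conjunct2, THEN conjunct2, THEN conjunct1] by blast
lemma S_add1: "a \<in> carrier A \<Longrightarrow> a1' \<in> carrier A' \<Longrightarrow> a2' \<in> carrier A' \<Longrightarrow> x1 \<in> P \<Longrightarrow> x2 \<in> P \<Longrightarrow>
        fst (pr x1) = fst (pr x2) \<Longrightarrow>
        \<Sigma> a (a1' \<otimes>\<^bsub>A'\<^esub> a2') (add1 x1 x2) = add1 (\<Sigma> a a1' x1) (\<Sigma> a a2' x2)"
  using lin[unfolded linearization_def, THEN conjunct2, THEN conjunct2, THEN conjunct2, THEN conjunct2, THEN conjunct2, THEN conjunct1] by blast

lemma pr_surj: "pr ` P = carrier B \<times> carrier B'"
  using bx[unfolded biext_def, THEN conjunct2, THEN conjunct2, THEN conjunct2, THEN conjunct1] by blast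
lemma pr_in: "x \<in> P \<Longrightarrow> fst (pr x) \<in> carrier B \<and> snd (pr x) \<in> carrier B'"
  using pr_surj by (metis image_eqI mem_Times_iff)
lemma act_in: "h \<in> carrier Kstar \<Longrightarrow> q \<in> P \<Longrightarrow> act h q \<in> P \<and> pr (act h q) = pr q"
  using bx[unfolded biext_def, THEN conjunct2, THEN conjunct2, THEN conjunct2, THEN conjunct2, THEN conjunct1] by blast
lemma act_one: "q \<in> P \<Longrightarrow> act 1 q = q"
  using bx[unfolded biext_def, THEN conjunct2, THEN conjunct2, THEN conjunct2, THEN conjunct2, THEN conjunct2, THEN conjunct1] by (simp add: Kstar_def)
lemma act_mult: "h \<in> carrier Kstar \<Longrightarrow> k \<in> carrier Kstar \<Longrightarrow> q \<in> P \<Longrightarrow> act (h * k) q = act h (act k q)"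
  using bx[unfolded biext_def, THEN conjunct2, THEN conjunct2, THEN conjunct2, THEN conjunct2, THEN conjunct2, THEN conjunct2, THEN conjunct1] by (simp add: Kstar_def)
lemma act_free: "h \<in> carrier Kstar \<Longrightarrow> q \<in> P \<Longrightarrow> act h q = q \<Longrightarrow> h = 1"
  using bx[unfolded biext_def, THEN conjunct2, THEN conjunct2, THEN conjunct2, THEN conjunct2, THEN conjunct2, THEN conjunct2, THEN conjunct2, THEN conjunct1] unfolding Kstar_def by auto
lemma act_trans: "q \<in> P \<Longrightarrow> q' \<in> P \<Longrightarrow> pr q = pr q' \<Longrightarrow> \<exists>h\<in>carrier Kstar. q' = act h q"
  using bx[unfolded biext_def, THEN conjunct2, THEN conjunct2, THEN conjunct2, THEN conjunct2, THEN conjunct2, THEN conjunct2, THEN conjunct2, THEN conjunct2, THEN conjunct1] by blast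
lemma fib1: "b \<in> carrier B \<Longrightarrow> \<exists>e.
        group_ext Kstar \<lparr>carrier = {q\<in>P. fst (pr q) = b}, monoid.mult = add1, one = e\<rparr>
                  B' (\<lambda>q. snd (pr q)) act"
  using bx[unfolded biext_def, THEN conjunct2, THEN conjunct2, THEN conjunct2, THEN conjunct2, THEN conjunct2, THEN conjunct2, THEN conjunct2, THEN conjunct2, THEN conjunct2, THEN conjunct1] by blast
lemma compat: "q11\<in>P \<Longrightarrow> q12\<in>P \<Longrightarrow> q21\<in>P \<Longrightarrow> q22\<in>P \<Longrightarrow>
        fst (pr q11) = fst (pr q12) \<Longrightarrow> fst (pr q21) = fst (pr q22) \<Longrightarrow>
        snd (pr q11) = snd (pr q21) \<Longrightarrow> snd (pr q12) = snd (pr q22) \<Longrightarrow>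
        add2 (add1 q11 q12) (add1 q21 q22) = add1 (add2 q11 q21) (add2 q12 q22)"
  using bx[unfolded biext_def, THEN conjunct2, THEN conjunct2, THEN conjunct2, THEN conjunct2, THEN conjunct2, THEN conjunct2, THEN conjunct2, THEN conjunct2, THEN conjunct2, THEN conjunct2, THEN conjunct2] by blast

lemma hu_mult: "a \<in> carrier A \<Longrightarrow> b \<in> carrier A \<Longrightarrow> u (a \<otimes>\<^bsub>A\<^esub> b) = u a \<otimes>\<^bsub>B\<^esub> u b"
  using hu by (simp add: hom_mult)
lemma hu_in: "a \<in> carrier A \<Longrightarrow> u a \<in> carrier B"
  using hu by (simp add: hom_in_carrier)
lemma hu_one: "u \<one>\<^bsub>A\<^esub> = \<one>\<^bsub>B\<^esub>"
  using hu by (simp add: hom_one A.is_group B.is_group)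
lemma hu'_mult: "a \<in> carrier A' \<Longrightarrow> b \<in> carrier A' \<Longrightarrow> u' (a \<otimes>\<^bsub>A'\<^esub> b) = u' a \<otimes>\<^bsub>B'\<^esub> u' b"
  using hu' by (simp add: hom_mult)
lemma hu'_in: "a \<in> carrier A' \<Longrightarrow> u' a \<in> carrier B'"
  using hu' by (simp add: hom_in_carrier)
lemma hu'_one: "u' \<one>\<^bsub>A'\<^esub> = \<one>\<^bsub>B'\<^esub>"
  using hu' by (simp add: hom_one A'.is_group B'.is_group)

lemma subN: "subgroup N B"
  using group_hom.img_is_subgroup[of A B u] hu A.is_group B.is_group
  by (simp add: group_hom_def group_hom_axioms_def)
lemma subN': "subgroup N' B'"
  using group_hom.img_is_subgroup[of A' B' u'] hu' A'.is_group B'.is_group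
  by (simp add: group_hom_def group_hom_axioms_def)

lemma O_Sigma:
  assumes "x \<in> P" "a \<in> carrier A" "a' \<in> carrier A'"
  shows "Orb (\<Sigma> a a' x) = Orb x"
proof
  show "Orb (\<Sigma> a a' x) \<subseteq> Orb x"
  proof
    fix y assume "y \<in> Orb (\<Sigma> a a' x)"
    then obtain b b' where bb: "b \<in> carrier A" "b' \<in> carrier A'" "y = \<Sigma> b b' (\<Sigma> a a' x)"
      unfolding lin_orbit_def by blast
    then have "y = \<Sigma> (b \<otimes>\<^bsub>A\<^esub> a) (b' \<otimes>\<^bsub>A'\<^esub> a') x" using S_mult assms by simp
    then show "y \<in> Orb x" unfolding lin_orbit_def using bb assms by blast
  qed
next
  show "Orb x \<subseteq> Orb (\<Sigma> a a' x)"
  proof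
    fix y assume "y \<in> Orb x"
    then obtain b b' where bb: "b \<in> carrier A" "b' \<in> carrier A'" "y = \<Sigma> b b' x"
      unfolding lin_orbit_def by blast
    have "\<Sigma> (b \<otimes>\<^bsub>A\<^esub> inv\<^bsub>A\<^esub> a) (b' \<otimes>\<^bsub>A'\<^esub> inv\<^bsub>A'\<^esub> a') (\<Sigma> a a' x)
        = \<Sigma> ((b \<otimes>\<^bsub>A\<^esub> inv\<^bsub>A\<^esub> a) \<otimes>\<^bsub>A\<^esub> a) ((b' \<otimes>\<^bsub>A'\<^esub> inv\<^bsub>A'\<^esub> a') \<otimes>\<^bsub>A'\<^esub> a') x"
      using S_mult assms bb by simp
    also have "\<dots> = y" using assms bb by (simp add: A.m_assoc A'.m_assoc)
    finally show "y \<in> Orb (\<Sigma> a a' x)" unfolding lin_orbit_def using bb assms by blast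
  qed
qed

lemma O_self: "x \<in> P \<Longrightarrow> x \<in> Orb x"
  unfolding lin_orbit_def using S_one by force

lemma O_sub: "x \<in> P \<Longrightarrow> Orb x \<subseteq> P"
  unfolding lin_orbit_def using S_closed by blast

lemma O_eq: "x \<in> P \<Longrightarrow> y \<in> P \<Longrightarrow> Orb x = Orb y \<Longrightarrow> \<exists>a\<in>carrier A. \<exists>a'\<in>carrier A'. y = \<Sigma> a a' x"
proof -
  assume "x \<in> P" "y \<in> P" "Orb x = Orb y"
  then have "y \<in> Orb x" using O_self[of y] by simp
  then show ?thesis unfolding lin_orbit_def by blast
qed

end


context qs
begin

lemma rep_props: "q \<in> Orb ` P \<Longrightarrow> repQ A A' \<Sigma> P q \<in> P \<and> Orb (repQ A A' \<Sigma> P q) = q"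
  unfolding repQ_def by (rule someI_ex) blast

lemma rep_O: "x \<in> P \<Longrightarrow> \<exists>a\<in>carrier A. \<exists>a'\<in>carrier A'. repQ A A' \<Sigma> P (Orb x) = \<Sigma> a a' x"
  using rep_props[of "Orb x"] O_eq[of x "repQ A A' \<Sigma> P (Orb x)"] by auto

lemma coset_absorb: "a \<in> carrier A \<Longrightarrow> b \<in> carrier B \<Longrightarrow> N #>\<^bsub>B\<^esub> (u a \<otimes>\<^bsub>B\<^esub> b) = N #>\<^bsub>B\<^esub> b"
  by (metis B.coset_join2 B.coset_mult_assoc hu_in image_eqI subN subgroup.subset)
lemma coset_absorb': "a \<in> carrier A' \<Longrightarrow> b \<in> carrier B' \<Longrightarrow> N' #>\<^bsub>B'\<^esub> (u' a \<otimes>\<^bsub>B'\<^esub> b) = N' #>\<^bsub>B'\<^esub> b"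
  by (metis B'.coset_join2 B'.coset_mult_assoc hu'_in image_eqI subN' subgroup.subset)

lemma coset_eqD: "b \<in> carrier B \<Longrightarrow> N #>\<^bsub>B\<^esub> b = N #>\<^bsub>B\<^esub> c \<Longrightarrow> \<exists>a\<in>carrier A. b = u a \<otimes>\<^bsub>B\<^esub> c"
proof -
  assume b: "b \<in> carrier B" and e: "N #>\<^bsub>B\<^esub> b = N #>\<^bsub>B\<^esub> c"
  have "b \<in> N #>\<^bsub>B\<^esub> b" using B.rcos_self[OF b subN] .
  then have "b \<in> N #>\<^bsub>B\<^esub> c" using e by simp
  then show ?thesis unfolding r_coset_def by blast
qed
lemma coset_eqD': "b \<in> carrier B' \<Longrightarrow> N' #>\<^bsub>B'\<^esub> b = N' #>\<^bsub>B'\<^esub> c \<Longrightarrow> \<exists>a\<in>carrier A'. b = u' a \<otimes>\<^bsub>B'\<^esub> c"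
proof -
  assume b: "b \<in> carrier B'" and e: "N' #>\<^bsub>B'\<^esub> b = N' #>\<^bsub>B'\<^esub> c"
  have "b \<in> N' #>\<^bsub>B'\<^esub> b" using B'.rcos_self[OF b subN'] .
  then have "b \<in> N' #>\<^bsub>B'\<^esub> c" using e by simp
  then show ?thesis unfolding r_coset_def by blast
qed

lemma prQ_O: "x \<in> P \<Longrightarrow> prQf A A' B B' u u' \<Sigma> P pr (Orb x) = (N #>\<^bsub>B\<^esub> fst (pr x), N' #>\<^bsub>B'\<^esub> snd (pr x))"
proof -
  assume x: "x \<in> P"
  obtain a a' where aa: "a \<in> carrier A" "a' \<in> carrier A'" "repQ A A' \<Sigma> P (Orb x) = \<Sigma> a a' x"
    using rep_O[OF x] by blast
  show ?thesis unfolding prQf_def aa(3) using S_pr[OF aa(1,2) x] pr_in[OF x] aa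
    by (simp add: coset_absorb coset_absorb')
qed

lemma actQ_O: "c \<in> carrier Kstar \<Longrightarrow> x \<in> P \<Longrightarrow> actQf A A' \<Sigma> P act c (Orb x) = Orb (act c x)"
proof -
  assume c: "c \<in> carrier Kstar" and x: "x \<in> P"
  obtain a a' where aa: "a \<in> carrier A" "a' \<in> carrier A'" "repQ A A' \<Sigma> P (Orb x) = \<Sigma> a a' x"
    using rep_O[OF x] by blast
  show ?thesis unfolding actQf_def aa(3) using S_act[OF aa(1,2) c x, symmetric] O_Sigma act_in[OF c x] aa
    by simp
qed

lemma S_fix: "x \<in> P \<Longrightarrow> a \<in> carrier A \<Longrightarrow> a' \<in> carrier A' \<Longrightarrow> pr (\<Sigma> a a' x) = pr x \<Longrightarrow> \<Sigma> a a' x = x"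
proof -
  assume x: "x \<in> P" and a: "a \<in> carrier A" and a': "a' \<in> carrier A'" and e: "pr (\<Sigma> a a' x) = pr x"
  have "u a \<otimes>\<^bsub>B\<^esub> fst (pr x) = fst (pr x)" "u' a' \<otimes>\<^bsub>B'\<^esub> snd (pr x) = snd (pr x)"
    using e S_pr[OF a a' x] by (metis fst_conv snd_conv)+
  then have "u a = \<one>\<^bsub>B\<^esub>" "u' a' = \<one>\<^bsub>B'\<^esub>" using pr_in[OF x] hu_in[OF a] hu'_in[OF a'] by auto
  then have "a = \<one>\<^bsub>A\<^esub>" "a' = \<one>\<^bsub>A'\<^esub>"
    using iu iu' a a' hu_one hu'_one A.one_closed A'.one_closed by (metis inj_onD)+
  then show ?thesis using S_one[OF x] by simp
qed

lemma adjust: "y \<in> P \<Longrightarrow> b \<in> carrier B \<Longrightarrow> b' \<in> carrier B' \<Longrightarrow> N #>\<^bsub>B\<^esub> b = N #>\<^bsub>B\<^esub> fst (pr y) \<Longrightarrow>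
   N' #>\<^bsub>B'\<^esub> b' = N' #>\<^bsub>B'\<^esub> snd (pr y) \<Longrightarrow> \<exists>z\<in>P. Orb z = Orb y \<and> pr z = (b, b')"
proof -
  assume y: "y \<in> P" and b: "b \<in> carrier B" and b': "b' \<in> carrier B'"
    and e1: "N #>\<^bsub>B\<^esub> b = N #>\<^bsub>B\<^esub> fst (pr y)" and e2: "N' #>\<^bsub>B'\<^esub> b' = N' #>\<^bsub>B'\<^esub> snd (pr y)"
  obtain a where a: "a \<in> carrier A" "b = u a \<otimes>\<^bsub>B\<^esub> fst (pr y)" using coset_eqD[OF b e1] by blast
  obtain a' where a': "a' \<in> carrier A'" "b' = u' a' \<otimes>\<^bsub>B'\<^esub> snd (pr y)" using coset_eqD'[OF b' e2] by blast
  show ?thesis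
    by (rule bexI[of _ "\<Sigma> a a' y"]) (use a a' y S_pr O_Sigma S_closed in auto)
qed

lemma add1_props: "x1 \<in> P \<Longrightarrow> x2 \<in> P \<Longrightarrow> fst (pr x1) = fst (pr x2) \<Longrightarrow>
   add1 x1 x2 \<in> P \<and> fst (pr (add1 x1 x2)) = fst (pr x1) \<and> snd (pr (add1 x1 x2)) = snd (pr x1) \<otimes>\<^bsub>B'\<^esub> snd (pr x2)"
proof -
  assume x1: "x1 \<in> P" and x2: "x2 \<in> P" and e: "fst (pr x1) = fst (pr x2)"
  obtain e0 where ge: "group_ext Kstar \<lparr>carrier = {q\<in>P. fst (pr q) = fst (pr x1)}, monoid.mult = add1, one = e0\<rparr>
                  B' (\<lambda>q. snd (pr q)) act" using fib1 pr_in[OF x1] by blast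
  let ?G = "\<lparr>carrier = {q\<in>P. fst (pr q) = fst (pr x1)}, monoid.mult = add1, one = e0\<rparr>"
  have cg: "comm_group ?G" and h: "(\<lambda>q. snd (pr q)) \<in> hom ?G B'" using ge unfolding group_ext_def by auto
  have "x1 \<otimes>\<^bsub>?G\<^esub> x2 \<in> carrier ?G" using x1 x2 e by (intro monoid.m_closed[OF comm_group.axioms(1)[OF cg, THEN comm_monoid.axioms(1)]]) auto
  moreover have "snd (pr (x1 \<otimes>\<^bsub>?G\<^esub> x2)) = snd (pr x1) \<otimes>\<^bsub>B'\<^esub> snd (pr x2)"
    using hom_mult[OF h, of x1 x2] x1 x2 e by simp
  ultimately show ?thesis by simp
qed

lemma addQ_O: "x1 \<in> P \<Longrightarrow> x2 \<in> P \<Longrightarrow> fst (pr x1) = fst (pr x2) \<Longrightarrow>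
   addQf A A' \<Sigma> P pr add1 (Orb x1) (Orb x2) = Orb (add1 x1 x2)"
proof -
  assume x1: "x1 \<in> P" and x2: "x2 \<in> P" and e: "fst (pr x1) = fst (pr x2)"
  let ?R = "\<lambda>xy. fst xy \<in> P \<and> snd xy \<in> P \<and> Orb (fst xy) = Orb x1 \<and>
                 Orb (snd xy) = Orb x2 \<and> fst (pr (fst xy)) = fst (pr (snd xy))"
  define yy where "yy = (SOME xy. ?R xy)"
  have "?R yy" unfolding yy_def by (rule someI[of _ "(x1, x2)"]) (use x1 x2 e in auto)
  then obtain y1 y2 where yy: "yy = (y1, y2)" and y1: "y1 \<in> P" and y2: "y2 \<in> P"
     and o1: "Orb y1 = Orb x1" and o2: "Orb y2 = Orb x2" and ey: "fst (pr y1) = fst (pr y2)"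
    by (cases yy) auto
  obtain a1 a1' where a1: "a1 \<in> carrier A" "a1' \<in> carrier A'" "y1 = \<Sigma> a1 a1' x1" using O_eq[OF x1 y1 o1[symmetric]] by blast
  obtain a2 a2' where a2: "a2 \<in> carrier A" "a2' \<in> carrier A'" "y2 = \<Sigma> a2 a2' x2" using O_eq[OF x2 y2 o2[symmetric]] by blast
  have "u a1 \<otimes>\<^bsub>B\<^esub> fst (pr x1) = u a2 \<otimes>\<^bsub>B\<^esub> fst (pr x2)" using ey a1 a2 S_pr x1 x2 by simp
  then have "u a1 = u a2" using e pr_in[OF x2] hu_in a1 a2 by (metis B.r_cancel)
  then have "a1 = a2" using iu a1 a2 by (auto dest: inj_onD)
  then have "add1 y1 y2 = \<Sigma> a1 (a1' \<otimes>\<^bsub>A'\<^esub> a2') (add1 x1 x2)"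
    using S_add1[OF a1(1) a1(2) a2(2) x1 x2 e] a1 a2 by simp
  then have "Orb (add1 y1 y2) = Orb (add1 x1 x2)"
    using O_Sigma add1_props[OF x1 x2 e] a1 a2 by simp
  then show ?thesis unfolding addQf_def yy_def[symmetric] yy by simp
qed

end


context qs
begin

abbreviation "prQ \<equiv> prQf A A' B B' u u' \<Sigma> P pr"
abbreviation "actQ \<equiv> actQf A A' \<Sigma> P act"
abbreviation "add1Q \<equiv> addQf A A' \<Sigma> P pr add1"

lemma fiberQ:
  assumes Xc: "Xc \<in> carrier (B Mod N)"
  shows "\<exists>e. group_ext Kstar \<lparr>carrier = {q\<in>Orb ` P. fst (prQ q) = Xc}, monoid.mult = add1Q, one = e\<rparr>
                  (B' Mod N') (\<lambda>q. snd (prQ q)) actQ"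
proof -
  obtain b where b: "b \<in> carrier B" and Xb: "Xc = N #>\<^bsub>B\<^esub> b"
    using Xc unfolding carrier_FactGroup by blast
  define Pb where "Pb = {q\<in>P. fst (pr q) = b}"
  obtain e where ge: "group_ext Kstar \<lparr>carrier = Pb, monoid.mult = add1, one = e\<rparr>
                  B' (\<lambda>q. snd (pr q)) act" using fib1[OF b] unfolding Pb_def by blast
  define G1 where "G1 = \<lparr>carrier = Pb, monoid.mult = add1, one = e\<rparr>"
  have cg1: "comm_group G1" and hp: "(\<lambda>q. snd (pr q)) \<in> hom G1 B'"
    and hk: "(\<lambda>h. act h e) \<in> hom Kstar G1"
    and injk: "inj_on (\<lambda>h. act h e) (carrier Kstar)"
    and kerk: "(\<lambda>h. act h e) ` carrier Kstar = kernel G1 B' (\<lambda>q. snd (pr q))"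
    and tr: "\<forall>h\<in>carrier Kstar. \<forall>g\<in>Pb. act h g = add1 (act h e) g"
    using ge unfolding group_ext_def G1_def by auto
  interpret G1: comm_group G1 by (rule cg1)
  have cG1: "carrier G1 = Pb" and mG1: "\<And>x y. x \<otimes>\<^bsub>G1\<^esub> y = add1 x y" and oG1: "\<one>\<^bsub>G1\<^esub> = e"
    unfolding G1_def by simp_all
  have closed1: "\<And>x y. x \<in> Pb \<Longrightarrow> y \<in> Pb \<Longrightarrow> add1 x y \<in> Pb"
    using G1.m_closed unfolding cG1 mG1 by blast
  have assoc1: "\<And>x y z. x \<in> Pb \<Longrightarrow> y \<in> Pb \<Longrightarrow> z \<in> Pb \<Longrightarrow> add1 (add1 x y) z = add1 x (add1 y z)"
    using G1.m_assoc unfolding cG1 mG1 by blast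
  have comm1: "\<And>x y. x \<in> Pb \<Longrightarrow> y \<in> Pb \<Longrightarrow> add1 x y = add1 y x"
    using G1.m_comm unfolding cG1 mG1 by blast
  have lone1: "\<And>x. x \<in> Pb \<Longrightarrow> add1 e x = x"
    using G1.l_one unfolding cG1 mG1 oG1 by blast
  have inv1: "\<And>x. x \<in> Pb \<Longrightarrow> \<exists>y\<in>Pb. add1 y x = e"
    using G1.l_inv G1.inv_closed unfolding cG1 mG1 oG1 by blast
  have e_in: "e \<in> Pb" using G1.one_closed unfolding cG1 oG1 .
  have Pb_P: "\<And>x. x \<in> Pb \<Longrightarrow> x \<in> P \<and> fst (pr x) = b" unfolding Pb_def by blast
  have e_snd: "snd (pr e) = \<one>\<^bsub>B'\<^esub>"
    using hom_one[OF hp G1.is_group B'.is_group] oG1 by simp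
  have actk_in: "\<And>h. h \<in> carrier Kstar \<Longrightarrow> act h e \<in> Pb"
    using hk e_in unfolding hom_def cG1 by auto
  have sp_mult: "\<And>x y. x \<in> Pb \<Longrightarrow> y \<in> Pb \<Longrightarrow> snd (pr (add1 x y)) = snd (pr x) \<otimes>\<^bsub>B'\<^esub> snd (pr y)"
    using hom_mult[OF hp] unfolding cG1 mG1 by blast
  have addQb: "\<And>x y. x \<in> Pb \<Longrightarrow> y \<in> Pb \<Longrightarrow> add1Q (Orb x) (Orb y) = Orb (add1 x y)"
    using addQ_O Pb_P by metis
  define GQ where "GQ = \<lparr>carrier = {q\<in>Orb ` P. fst (prQ q) = Xc}, monoid.mult = add1Q, one = Orb e\<rparr>"
  have cQ: "{q\<in>Orb ` P. fst (prQ q) = Xc} = Orb ` Pb"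
  proof
    show "Orb ` Pb \<subseteq> {q\<in>Orb ` P. fst (prQ q) = Xc}"
      using Pb_P prQ_O Xb by auto
  next
    show "{q\<in>Orb ` P. fst (prQ q) = Xc} \<subseteq> Orb ` Pb"
    proof
      fix q assume "q \<in> {q\<in>Orb ` P. fst (prQ q) = Xc}"
      then obtain y where y: "y \<in> P" "q = Orb y" "N #>\<^bsub>B\<^esub> fst (pr y) = N #>\<^bsub>B\<^esub> b"
        using prQ_O Xb by auto
      obtain z where z: "z \<in> P" "Orb z = Orb y" "pr z = (b, snd (pr y))"
        using adjust[OF y(1) b _ y(3)[symmetric]] pr_in[OF y(1)] by blast
      then have "z \<in> Pb" unfolding Pb_def by simp
      then show "q \<in> Orb ` Pb" using y z by (metis image_eqI)
    qed
  qed
  have cGQ: "carrier GQ = Orb ` Pb" unfolding GQ_def using cQ by simp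
  have mGQ: "\<And>x y. x \<otimes>\<^bsub>GQ\<^esub> y = add1Q x y" and oGQ: "\<one>\<^bsub>GQ\<^esub> = Orb e"
    unfolding GQ_def by simp_all
  have cgQ: "comm_group GQ"
  proof (rule comm_groupI, unfold cGQ mGQ oGQ)
    show "Orb e \<in> Orb ` Pb" using e_in by blast
  next
    fix x y assume "x \<in> Orb ` Pb" "y \<in> Orb ` Pb"
    then show "add1Q x y \<in> Orb ` Pb" using addQb closed1 by auto
  next
    fix x y z assume "x \<in> Orb ` Pb" "y \<in> Orb ` Pb" "z \<in> Orb ` Pb"
    then show "add1Q (add1Q x y) z = add1Q x (add1Q y z)" using addQb closed1 assoc1 by auto
  next
    fix x y assume "x \<in> Orb ` Pb" "y \<in> Orb ` Pb"
    then show "add1Q x y = add1Q y x" using addQb comm1 by auto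
  next
    fix x assume "x \<in> Orb ` Pb"
    then show "add1Q (Orb e) x = x" using addQb lone1 e_in by auto
  next
    fix x assume "x \<in> Orb ` Pb"
    then obtain x0 where x0: "x0 \<in> Pb" "x = Orb x0" by blast
    then obtain y where "y \<in> Pb" "add1 y x0 = e" using inv1 by blast
    then show "\<exists>y\<in>Orb ` Pb. add1Q y x = Orb e" using addQb x0 by (intro bexI[of _ "Orb y"]) auto
  qed
  have sQ: "\<And>x. x \<in> Pb \<Longrightarrow> snd (prQ (Orb x)) = N' #>\<^bsub>B'\<^esub> snd (pr x)"
    using prQ_O Pb_P by simp
  have nN': "N' \<lhd> B'" using B'.subgroup_imp_normal[OF subN'] .
  have hQ: "(\<lambda>q. snd (prQ q)) \<in> hom GQ (B' Mod N')"
  proof (rule homI, unfold cGQ mGQ)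
    fix x assume "x \<in> Orb ` Pb"
    then obtain x0 where "x0 \<in> Pb" "x = Orb x0" by blast
    then show "snd (prQ x) \<in> carrier (B' Mod N')"
      using sQ Pb_P pr_in unfolding carrier_FactGroup by (metis image_eqI)
  next
    fix x y assume "x \<in> Orb ` Pb" "y \<in> Orb ` Pb"
    then obtain x0 y0 where xy: "x0 \<in> Pb" "y0 \<in> Pb" "x = Orb x0" "y = Orb y0" by blast
    have in1: "snd (pr x0) \<in> carrier B'" "snd (pr y0) \<in> carrier B'" using xy Pb_P pr_in by auto
    have "snd (prQ (add1Q x y)) = N' #>\<^bsub>B'\<^esub> snd (pr (add1 x0 y0))"
      using xy addQb sQ closed1 by simp
    also have "\<dots> = N' #>\<^bsub>B'\<^esub> (snd (pr x0) \<otimes>\<^bsub>B'\<^esub> snd (pr y0))" using sp_mult xy by simp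
    also have "\<dots> = (N' #>\<^bsub>B'\<^esub> snd (pr x0)) <#>\<^bsub>B'\<^esub> (N' #>\<^bsub>B'\<^esub> snd (pr y0))"
      using normal.rcos_sum[OF nN' in1] by simp
    also have "\<dots> = snd (prQ x) \<otimes>\<^bsub>B' Mod N'\<^esub> snd (prQ y)" using sQ xy by simp
    finally show "snd (prQ (add1Q x y)) = snd (prQ x) \<otimes>\<^bsub>B' Mod N'\<^esub> snd (prQ y)" .
  qed
  have sQsurj: "(\<lambda>q. snd (prQ q)) ` carrier GQ = carrier (B' Mod N')"
  proof
    show "(\<lambda>q. snd (prQ q)) ` carrier GQ \<subseteq> carrier (B' Mod N')" using hQ unfolding hom_def by auto
  next
    show "carrier (B' Mod N') \<subseteq> (\<lambda>q. snd (prQ q)) ` carrier GQ"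
    proof
      fix Y assume "Y \<in> carrier (B' Mod N')"
      then obtain b' where b': "b' \<in> carrier B'" "Y = N' #>\<^bsub>B'\<^esub> b'" unfolding carrier_FactGroup by blast
      have "(b, b') \<in> pr ` P" using pr_surj b b' by simp
      then obtain x where "x \<in> P" "pr x = (b, b')" by (metis imageE)
      then have "x \<in> Pb" "snd (pr x) = b'" unfolding Pb_def by auto
      then show "Y \<in> (\<lambda>q. snd (prQ q)) ` carrier GQ" unfolding cGQ using sQ b' by force
    qed
  qed
  have actQe: "\<And>h. h \<in> carrier Kstar \<Longrightarrow> actQ h (Orb e) = Orb (act h e)"
    using actQ_O Pb_P e_in by simp
  have hkQ: "(\<lambda>h. actQ h \<one>\<^bsub>GQ\<^esub>) \<in> hom Kstar GQ"
  proof (rule homI, unfold cGQ mGQ oGQ)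
    fix h :: 'k assume "h \<in> carrier Kstar"
    then show "actQ h (Orb e) \<in> Orb ` Pb" using actQe actk_in by auto
  next
    fix h k :: 'k assume hk': "h \<in> carrier Kstar" "k \<in> carrier Kstar"
    have "act (h \<otimes>\<^bsub>Kstar\<^esub> k) e = add1 (act h e) (act k e)"
      using hom_mult[OF hk hk'] unfolding mG1 .
    moreover have "h \<otimes>\<^bsub>Kstar\<^esub> k \<in> carrier Kstar" using hk' by (auto simp: Kstar_def)
    ultimately show "actQ (h \<otimes>\<^bsub>Kstar\<^esub> k) (Orb e) = add1Q (actQ h (Orb e)) (actQ k (Orb e))"
      using actQe hk' addQb actk_in by simp
  qed
  have injQ: "inj_on (\<lambda>h. actQ h \<one>\<^bsub>GQ\<^esub>) (carrier Kstar)"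
  proof (rule inj_onI, unfold oGQ)
    fix h k :: 'k assume hk': "h \<in> carrier Kstar" "k \<in> carrier Kstar" and eq: "actQ h (Orb e) = actQ k (Orb e)"
    then have "Orb (act h e) = Orb (act k e)" using actQe by simp
    then obtain a a' where aa: "a \<in> carrier A" "a' \<in> carrier A'" "act k e = \<Sigma> a a' (act h e)"
      using O_eq actk_in Pb_P hk' by metis
    have "pr (act k e) = pr e" "pr (act h e) = pr e" using act_in hk' e_in Pb_P by auto
    then have "\<Sigma> a a' (act h e) = act h e" using S_fix aa actk_in hk' Pb_P by metis
    then have "act k e = act h e" using aa by simp
    then show "h = k" using injk hk' by (metis inj_onD)
  qed
  have kerQ: "(\<lambda>h. actQ h \<one>\<^bsub>GQ\<^esub>) ` carrier Kstar = kernel GQ (B' Mod N') (\<lambda>q. snd (prQ q))"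
  proof
    show "(\<lambda>h. actQ h \<one>\<^bsub>GQ\<^esub>) ` carrier Kstar \<subseteq> kernel GQ (B' Mod N') (\<lambda>q. snd (prQ q))"
    proof
      fix q assume "q \<in> (\<lambda>h. actQ h \<one>\<^bsub>GQ\<^esub>) ` carrier Kstar"
      then obtain h where h: "h \<in> carrier Kstar" "q = Orb (act h e)" using actQe oGQ by auto
      have "snd (pr (act h e)) = \<one>\<^bsub>B'\<^esub>" using act_in h e_in Pb_P e_snd by auto
      then have "snd (prQ q) = N'" using sQ actk_in h B'.coset_mult_one subN' subgroup.subset by metis
      then show "q \<in> kernel GQ (B' Mod N') (\<lambda>q. snd (prQ q))"
        unfolding kernel_def cGQ using h actk_in by auto
    qed
  next
    show "kernel GQ (B' Mod N') (\<lambda>q. snd (prQ q)) \<subseteq> (\<lambda>h. actQ h \<one>\<^bsub>GQ\<^esub>) ` carrier Kstar"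
    proof
      fix q assume "q \<in> kernel GQ (B' Mod N') (\<lambda>q. snd (prQ q))"
      then obtain x where x: "x \<in> Pb" "q = Orb x" "N' #>\<^bsub>B'\<^esub> snd (pr x) = N'"
        unfolding kernel_def cGQ using sQ by auto
      have xP: "x \<in> P" "fst (pr x) = b" using Pb_P x by auto
      have "snd (pr x) \<in> N'" using B'.rcos_self[OF _ subN', of "snd (pr x)"] pr_in xP x by simp
      then obtain a' where a': "a' \<in> carrier A'" "snd (pr x) = u' a'" by blast
      define z where "z = \<Sigma> \<one>\<^bsub>A\<^esub> (inv\<^bsub>A'\<^esub> a') x"
      have ia: "inv\<^bsub>A'\<^esub> a' \<in> carrier A'" using a' by simp
      have zP: "z \<in> P" unfolding z_def using S_closed ia xP by simp
      have "pr z = (b, u' (inv\<^bsub>A'\<^esub> a') \<otimes>\<^bsub>B'\<^esub> u' a')"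
        unfolding z_def using S_pr[OF A.one_closed ia xP(1)] xP a' hu_one b by simp
      also have "u' (inv\<^bsub>A'\<^esub> a') \<otimes>\<^bsub>B'\<^esub> u' a' = \<one>\<^bsub>B'\<^esub>"
        using hu'_mult[OF ia a'(1), symmetric] a' hu'_one by simp
      finally have prz: "pr z = (b, \<one>\<^bsub>B'\<^esub>)" .
      have "z \<in> Pb" unfolding Pb_def using zP prz by simp
      then have "z \<in> kernel G1 B' (\<lambda>q. snd (pr q))" unfolding kernel_def cG1 using prz by simp
      then obtain h where h: "h \<in> carrier Kstar" "z = act h e" using kerk by blast
      have "q = Orb z" unfolding z_def x(2) using O_Sigma[OF xP(1) A.one_closed ia] by simp
      then show "q \<in> (\<lambda>h. actQ h \<one>\<^bsub>GQ\<^esub>) ` carrier Kstar" using h actQe oGQ by auto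
    qed
  qed
  have trQ: "\<forall>h\<in>carrier Kstar. \<forall>g\<in>carrier GQ. actQ h g = actQ h \<one>\<^bsub>GQ\<^esub> \<otimes>\<^bsub>GQ\<^esub> g"
  proof (intro ballI, unfold cGQ mGQ oGQ)
    fix h :: 'k and g assume h: "h \<in> carrier Kstar" and "g \<in> Orb ` Pb"
    then obtain x where x: "x \<in> Pb" "g = Orb x" by blast
    have "actQ h g = Orb (act h x)" using actQ_O h x Pb_P by simp
    also have "\<dots> = Orb (add1 (act h e) x)" using tr h x by simp
    also have "\<dots> = add1Q (actQ h (Orb e)) g" using addQb actk_in h x actQe by simp
    finally show "actQ h g = add1Q (actQ h (Orb e)) g" .
  qed
  have "group_ext Kstar GQ (B' Mod N') (\<lambda>q. snd (prQ q)) actQ"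
    unfolding group_ext_def using cgQ hQ sQsurj hkQ injQ kerQ trQ by blast
  then show ?thesis unfolding GQ_def by blast
qed

end



lemma biext_swap:
  assumes "biext GX GY H Q pr act add1 add2"
  shows "biext GY GX H Q (\<lambda>q. prod.swap (pr q)) act add2 add1"
proof -
  note d = assms[unfolded biext_def]
  have i4: "pr ` Q = carrier GX \<times> carrier GY" using d by (elim conjE) assumption
  have "(\<lambda>q. prod.swap (pr q)) ` Q = prod.swap ` (pr ` Q)" by auto
  also have "\<dots> = carrier GY \<times> carrier GX" unfolding i4 by auto
  finally have s4: "(\<lambda>q. prod.swap (pr q)) ` Q = carrier GY \<times> carrier GX" .
  have c12: "\<forall>q11\<in>Q. \<forall>q12\<in>Q. \<forall>q21\<in>Q. \<forall>q22\<in>Q.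
        fst (pr q11) = fst (pr q12) \<and> fst (pr q21) = fst (pr q22) \<and>
        snd (pr q11) = snd (pr q21) \<and> snd (pr q12) = snd (pr q22) \<longrightarrow>
        add2 (add1 q11 q12) (add1 q21 q22) = add1 (add2 q11 q21) (add2 q12 q22)"
    using d by (elim conjE) assumption
  have c12': "\<forall>q11\<in>Q. \<forall>q12\<in>Q. \<forall>q21\<in>Q. \<forall>q22\<in>Q.
        fst (prod.swap (pr q11)) = fst (prod.swap (pr q12)) \<and> fst (prod.swap (pr q21)) = fst (prod.swap (pr q22)) \<and>
        snd (prod.swap (pr q11)) = snd (prod.swap (pr q21)) \<and> snd (prod.swap (pr q12)) = snd (prod.swap (pr q22)) \<longrightarrow>
        add1 (add2 q11 q12) (add2 q21 q22) = add2 (add1 q11 q21) (add1 q12 q22)"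
  proof (intro ballI impI)
    fix q11 q12 q21 q22 assume q: "q11 \<in> Q" "q12 \<in> Q" "q21 \<in> Q" "q22 \<in> Q"
      and "fst (prod.swap (pr q11)) = fst (prod.swap (pr q12)) \<and> fst (prod.swap (pr q21)) = fst (prod.swap (pr q22)) \<and>
        snd (prod.swap (pr q11)) = snd (prod.swap (pr q21)) \<and> snd (prod.swap (pr q12)) = snd (prod.swap (pr q22))"
    then have "fst (pr q11) = fst (pr q21) \<and> fst (pr q12) = fst (pr q22) \<and>
        snd (pr q11) = snd (pr q12) \<and> snd (pr q21) = snd (pr q22)" by simp
    then show "add1 (add2 q11 q12) (add2 q21 q22) = add2 (add1 q11 q21) (add1 q12 q22)"
      using c12 q by metis
  qed
  have f1: "\<forall>x\<in>carrier GX. \<exists>e.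
        group_ext H \<lparr>carrier = {q\<in>Q. fst (pr q) = x}, monoid.mult = add1, one = e\<rparr>
                  GY (\<lambda>q. snd (pr q)) act" using d by (elim conjE) assumption
  have f2: "\<forall>y\<in>carrier GY. \<exists>e.
        group_ext H \<lparr>carrier = {q\<in>Q. snd (pr q) = y}, monoid.mult = add2, one = e\<rparr>
                  GX (\<lambda>q. fst (pr q)) act" using d by (elim conjE) assumption
  have r1a: "comm_group GX" using d by (elim conjE) assumption
  have r1b: "comm_group GY" using d by (elim conjE) assumption
  have r1c: "comm_group H" using d by (elim conjE) assumption
  have r6: "\<forall>q\<in>Q. act \<one>\<^bsub>H\<^esub> q = q" using d by (elim conjE) assumption
  have r7: "\<forall>h\<in>carrier H. \<forall>k\<in>carrier H. \<forall>q\<in>Q. act (h \<otimes>\<^bsub>H\<^esub> k) q = act h (act k q)" using d by (elim conjE) assumption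
  have r8: "\<forall>h\<in>carrier H. \<forall>q\<in>Q. act h q = q \<longrightarrow> h = \<one>\<^bsub>H\<^esub>" using d by (elim conjE) assumption
  have r5: "\<forall>h\<in>carrier H. \<forall>q\<in>Q. act h q \<in> Q \<and> pr (act h q) = pr q" using d by (elim conjE) assumption
  have r9: "\<forall>q\<in>Q. \<forall>q'\<in>Q. pr q = pr q' \<longrightarrow> (\<exists>h\<in>carrier H. q' = act h q)" using d by (elim conjE) assumption
  have p5: "\<forall>h\<in>carrier H. \<forall>q\<in>Q. act h q \<in> Q \<and> prod.swap (pr (act h q)) = prod.swap (pr q)"
    using r5 by simp
  have p9: "\<forall>q\<in>Q. \<forall>q'\<in>Q. prod.swap (pr q) = prod.swap (pr q') \<longrightarrow> (\<exists>h\<in>carrier H. q' = act h q)"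
    using r9 by (metis swap_swap)
  have f1': "\<forall>x\<in>carrier GX. \<exists>e.
        group_ext H \<lparr>carrier = {q\<in>Q. snd (prod.swap (pr q)) = x}, monoid.mult = add1, one = e\<rparr>
                  GY (\<lambda>q. fst (prod.swap (pr q))) act" using f1 by simp
  have f2': "\<forall>y\<in>carrier GY. \<exists>e.
        group_ext H \<lparr>carrier = {q\<in>Q. fst (prod.swap (pr q)) = y}, monoid.mult = add2, one = e\<rparr>
                  GX (\<lambda>q. snd (prod.swap (pr q))) act" using f2 by simp
  show ?thesis unfolding biext_def
    by (intro conjI; (rule r1a r1b r1c s4 p5 r6 r7 r8 p9 f1' f2' c12')?)
qed

lemma linearization_swap:
  assumes "linearization A A' B B' u u' H P pr act add1 add2 \<Sigma>"
  shows "linearization A' A B' B u' u H P (\<lambda>q. prod.swap (pr q)) act add2 add1 (\<lambda>a' a. \<Sigma> a a')"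
proof -
  note d = assms[unfolded linearization_def]
  have p1: "\<forall>a\<in>carrier A. \<forall>a'\<in>carrier A'. \<forall>x\<in>P. \<Sigma> a a' x \<in> P" using d by (elim conjE) assumption
  have p2: "\<forall>x\<in>P. \<Sigma> \<one>\<^bsub>A\<^esub> \<one>\<^bsub>A'\<^esub> x = x" using d by (elim conjE) assumption
  have p3: "\<forall>a1\<in>carrier A. \<forall>a2\<in>carrier A. \<forall>a1'\<in>carrier A'. \<forall>a2'\<in>carrier A'. \<forall>x\<in>P.
        \<Sigma> (a1 \<otimes>\<^bsub>A\<^esub> a2) (a1' \<otimes>\<^bsub>A'\<^esub> a2') x = \<Sigma> a1 a1' (\<Sigma> a2 a2' x)" using d by (elim conjE) assumption
  have p4: "\<forall>a\<in>carrier A. \<forall>a'\<in>carrier A'. \<forall>c\<in>carrier H. \<forall>x\<in>P.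
        \<Sigma> a a' (act c x) = act c (\<Sigma> a a' x)" using d by (elim conjE) assumption
  have p5: "\<forall>a\<in>carrier A. \<forall>a'\<in>carrier A'. \<forall>x\<in>P.
        pr (\<Sigma> a a' x) = (u a \<otimes>\<^bsub>B\<^esub> fst (pr x), u' a' \<otimes>\<^bsub>B'\<^esub> snd (pr x))" using d by (elim conjE) assumption
  have p6: "\<forall>a\<in>carrier A. \<forall>a1'\<in>carrier A'. \<forall>a2'\<in>carrier A'. \<forall>x1\<in>P. \<forall>x2\<in>P.
        fst (pr x1) = fst (pr x2) \<longrightarrow>
        \<Sigma> a (a1' \<otimes>\<^bsub>A'\<^esub> a2') (add1 x1 x2) = add1 (\<Sigma> a a1' x1) (\<Sigma> a a2' x2)" using d by (elim conjE) assumption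
  have p7: "\<forall>a1\<in>carrier A. \<forall>a2\<in>carrier A. \<forall>a'\<in>carrier A'. \<forall>x1\<in>P. \<forall>x2\<in>P.
        snd (pr x1) = snd (pr x2) \<longrightarrow>
        \<Sigma> (a1 \<otimes>\<^bsub>A\<^esub> a2) a' (add2 x1 x2) = add2 (\<Sigma> a1 a' x1) (\<Sigma> a2 a' x2)" using d by (elim conjE) assumption
  show ?thesis unfolding linearization_def
  proof (intro conjI)
    show "\<forall>a\<in>carrier A'. \<forall>a'\<in>carrier A. \<forall>x\<in>P. \<Sigma> a' a x \<in> P" using p1 by blast
    show "\<forall>x\<in>P. \<Sigma> \<one>\<^bsub>A\<^esub> \<one>\<^bsub>A'\<^esub> x = x" using p2 by blast
    show "\<forall>a1\<in>carrier A'. \<forall>a2\<in>carrier A'. \<forall>a1'\<in>carrier A. \<forall>a2'\<in>carrier A. \<forall>x\<in>P.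
        \<Sigma> (a1' \<otimes>\<^bsub>A\<^esub> a2') (a1 \<otimes>\<^bsub>A'\<^esub> a2) x = \<Sigma> a1' a1 (\<Sigma> a2' a2 x)" using p3 by blast
    show "\<forall>a\<in>carrier A'. \<forall>a'\<in>carrier A. \<forall>c\<in>carrier H. \<forall>x\<in>P.
        \<Sigma> a' a (act c x) = act c (\<Sigma> a' a x)" using p4 by blast
    show "\<forall>a\<in>carrier A'. \<forall>a'\<in>carrier A. \<forall>x\<in>P.
        prod.swap (pr (\<Sigma> a' a x)) = (u' a \<otimes>\<^bsub>B'\<^esub> fst (prod.swap (pr x)), u a' \<otimes>\<^bsub>B\<^esub> snd (prod.swap (pr x)))"
      using p5 by simp
    show "\<forall>a\<in>carrier A'. \<forall>a1'\<in>carrier A. \<forall>a2'\<in>carrier A. \<forall>x1\<in>P. \<forall>x2\<in>P.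
        fst (prod.swap (pr x1)) = fst (prod.swap (pr x2)) \<longrightarrow>
        \<Sigma> (a1' \<otimes>\<^bsub>A\<^esub> a2') a (add2 x1 x2) = add2 (\<Sigma> a1' a x1) (\<Sigma> a2' a x2)" using p7 by simp
    show "\<forall>a1\<in>carrier A'. \<forall>a2\<in>carrier A'. \<forall>a'\<in>carrier A. \<forall>x1\<in>P. \<forall>x2\<in>P.
        snd (prod.swap (pr x1)) = snd (prod.swap (pr x2)) \<longrightarrow>
        \<Sigma> a' (a1 \<otimes>\<^bsub>A'\<^esub> a2) (add1 x1 x2) = add1 (\<Sigma> a' a1 x1) (\<Sigma> a' a2 x2)" using p6 by simp
  qed
qed

lemma (in qs) qs_swap: "qs A' B' A B u' u P (\<lambda>q. prod.swap (pr q)) act add2 add1 (\<lambda>a' a. \<Sigma> a a')"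
  using cA cB cA' cB' hu hu' biext_swap[OF bx] linearization_swap[OF lin] iu iu'
  by (simp add: qs_def)

lemma prQf_swap: "prQf A' A B' B u' u (\<lambda>a' a. \<Sigma> a a') P (\<lambda>x. prod.swap (pr x)) q
   = prod.swap (prQf A A' B B' u u' \<Sigma> P pr q)"
  unfolding prQf_def by (simp add: repQ_swap[of A' A \<Sigma> P q])

lemma actQf_swap: "actQf A' A (\<lambda>a' a. \<Sigma> a a') P act = actQf A A' \<Sigma> P act"
proof (intro ext)
  fix c q show "actQf A' A (\<lambda>a' a. \<Sigma> a a') P act c q = actQf A A' \<Sigma> P act c q"
    unfolding actQf_def by (simp only: repQ_swap[of A' A \<Sigma> P q] lin_orbit_swap[of A' A \<Sigma>])
qed



context qs
begin

lemma main: "\<exists>prQ actQ add1Q add2Q.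
    biext (B Mod (u ` carrier A)) (B' Mod (u' ` carrier A')) (Kstar :: 'k monoid)
          (lin_orbit A A' \<Sigma> ` P) prQ actQ add1Q add2Q \<and>
    (\<forall>x\<in>P. prQ (lin_orbit A A' \<Sigma> x) =
        ((u ` carrier A) #>\<^bsub>B\<^esub> fst (pr x), (u' ` carrier A') #>\<^bsub>B'\<^esub> snd (pr x))) \<and>
    (\<forall>c\<in>carrier (Kstar :: 'k monoid). \<forall>x\<in>P.
        actQ c (lin_orbit A A' \<Sigma> x) = lin_orbit A A' \<Sigma> (act c x)) \<and>
    (\<forall>x1\<in>P. \<forall>x2\<in>P. fst (pr x1) = fst (pr x2) \<longrightarrow>
        add1Q (lin_orbit A A' \<Sigma> x1) (lin_orbit A A' \<Sigma> x2) = lin_orbit A A' \<Sigma> (add1 x1 x2)) \<and>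
    (\<forall>x1\<in>P. \<forall>x2\<in>P. snd (pr x1) = snd (pr x2) \<longrightarrow>
        add2Q (lin_orbit A A' \<Sigma> x1) (lin_orbit A A' \<Sigma> x2) = lin_orbit A A' \<Sigma> (add2 x1 x2))"
proof -
  interpret q2: qs A' B' A B u' u P "\<lambda>q. prod.swap (pr q)" act add2 add1 "\<lambda>a' a. \<Sigma> a a'"
    by (rule qs_swap)
  have os: "lin_orbit A' A (\<lambda>a' a. \<Sigma> a a') = Orb" by (rule lin_orbit_swap)
  define add2Q where "add2Q = addQf A' A (\<lambda>a' a. \<Sigma> a a') P (\<lambda>q. prod.swap (pr q)) add2"
  have add2Q_O: "\<And>x1 x2. x1 \<in> P \<Longrightarrow> x2 \<in> P \<Longrightarrow> snd (pr x1) = snd (pr x2) \<Longrightarrow>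
      add2Q (Orb x1) (Orb x2) = Orb (add2 x1 x2)"
    using q2.addQ_O unfolding os add2Q_def by simp
  have add2_props: "\<And>x1 x2. x1 \<in> P \<Longrightarrow> x2 \<in> P \<Longrightarrow> snd (pr x1) = snd (pr x2) \<Longrightarrow>
      add2 x1 x2 \<in> P \<and> snd (pr (add2 x1 x2)) = snd (pr x1) \<and> fst (pr (add2 x1 x2)) = fst (pr x1) \<otimes>\<^bsub>B\<^esub> fst (pr x2)"
    using q2.add1_props by simp
  have fib2: "\<forall>y\<in>carrier (B' Mod N'). \<exists>e. group_ext (Kstar :: 'k monoid)
        \<lparr>carrier = {q\<in>Orb ` P. snd (prQ q) = y}, monoid.mult = add2Q, one = e\<rparr>
        (B Mod N) (\<lambda>q. fst (prQ q)) actQ"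
    using q2.fiberQ unfolding os add2Q_def prQf_swap[of A' A B' B u' u \<Sigma> P pr] actQf_swap[of A' A \<Sigma> P act]
    by simp
  have fib1: "\<forall>x\<in>carrier (B Mod N). \<exists>e. group_ext (Kstar :: 'k monoid)
        \<lparr>carrier = {q\<in>Orb ` P. fst (prQ q) = x}, monoid.mult = add1Q, one = e\<rparr>
        (B' Mod N') (\<lambda>q. snd (prQ q)) actQ"
    using fiberQ by blast
  have b1: "comm_group (B Mod N)" using B.abelian_FactGroup[OF subN] .
  have b2: "comm_group (B' Mod N')" using B'.abelian_FactGroup[OF subN'] .
  have b3: "comm_group (Kstar :: 'k monoid)" by (rule comm_group_Kstar)
  have b4: "prQ ` (Orb ` P) = carrier (B Mod N) \<times> carrier (B' Mod N')"
  proof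
    show "prQ ` (Orb ` P) \<subseteq> carrier (B Mod N) \<times> carrier (B' Mod N')"
    proof
      fix z assume "z \<in> prQ ` (Orb ` P)"
      then obtain x where x: "x \<in> P" "z = prQ (Orb x)" by blast
      then show "z \<in> carrier (B Mod N) \<times> carrier (B' Mod N')"
        using prQ_O[OF x(1)] pr_in[OF x(1)] unfolding carrier_FactGroup by auto
    qed
  next
    show "carrier (B Mod N) \<times> carrier (B' Mod N') \<subseteq> prQ ` (Orb ` P)"
    proof
      fix z assume "z \<in> carrier (B Mod N) \<times> carrier (B' Mod N')"
      then obtain b b' where bb: "b \<in> carrier B" "b' \<in> carrier B'" "z = (N #>\<^bsub>B\<^esub> b, N' #>\<^bsub>B'\<^esub> b')"
        unfolding carrier_FactGroup by auto
      have "(b, b') \<in> pr ` P" using pr_surj bb by simp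
      then obtain x where x: "x \<in> P" "pr x = (b, b')" by (metis imageE)
      then have "prQ (Orb x) = z" using prQ_O bb by simp
      then show "z \<in> prQ ` (Orb ` P)" using x by blast
    qed
  qed
  have b5: "\<forall>h\<in>carrier (Kstar :: 'k monoid). \<forall>q\<in>Orb ` P. actQ h q \<in> Orb ` P \<and> prQ (actQ h q) = prQ q"
  proof (intro ballI)
    fix h :: 'k and q assume h: "h \<in> carrier Kstar" and "q \<in> Orb ` P"
    then obtain x where x: "x \<in> P" "q = Orb x" by blast
    have "actQ h q = Orb (act h x)" using actQ_O h x by simp
    then show "actQ h q \<in> Orb ` P \<and> prQ (actQ h q) = prQ q"
      using act_in[OF h x(1)] prQ_O x by simp
  qed
  have one_K: "\<one>\<^bsub>(Kstar :: 'k monoid)\<^esub> = 1" "(1::'k) \<in> carrier Kstar" by (simp_all add: Kstar_def)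
  have mult_K: "\<And>h k::'k. h \<otimes>\<^bsub>Kstar\<^esub> k = h * k" by (simp add: Kstar_def)
  have multc_K: "\<And>h k::'k. h \<in> carrier Kstar \<Longrightarrow> k \<in> carrier Kstar \<Longrightarrow> h * k \<in> carrier Kstar" by (simp add: Kstar_def)
  have b6: "\<forall>q\<in>Orb ` P. actQ \<one>\<^bsub>(Kstar :: 'k monoid)\<^esub> q = q"
    using actQ_O one_K act_one by auto
  have b7: "\<forall>h\<in>carrier (Kstar :: 'k monoid). \<forall>k\<in>carrier (Kstar :: 'k monoid). \<forall>q\<in>Orb ` P.
      actQ (h \<otimes>\<^bsub>Kstar\<^esub> k) q = actQ h (actQ k q)"
  proof (intro ballI)
    fix h k :: 'k and q assume h: "h \<in> carrier Kstar" and k: "k \<in> carrier Kstar" and "q \<in> Orb ` P"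
    then obtain x where x: "x \<in> P" "q = Orb x" by blast
    have "actQ (h \<otimes>\<^bsub>Kstar\<^esub> k) q = Orb (act h (act k x))"
      using actQ_O multc_K[OF h k] x act_mult[OF h k x(1)] mult_K by simp
    also have "\<dots> = actQ h (actQ k q)" using actQ_O x h k act_in by simp
    finally show "actQ (h \<otimes>\<^bsub>Kstar\<^esub> k) q = actQ h (actQ k q)" .
  qed
  have b8: "\<forall>h\<in>carrier (Kstar :: 'k monoid). \<forall>q\<in>Orb ` P. actQ h q = q \<longrightarrow> h = \<one>\<^bsub>(Kstar :: 'k monoid)\<^esub>"
  proof (intro ballI impI)
    fix h :: 'k and q assume h: "h \<in> carrier Kstar" and "q \<in> Orb ` P" and eq: "actQ h q = q"
    then obtain x where x: "x \<in> P" "q = Orb x" by blast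
    have ai: "act h x \<in> P" "pr (act h x) = pr x" using act_in[OF h x(1)] by auto
    have "Orb x = Orb (act h x)" using eq actQ_O h x by simp
    then obtain a a' where aa: "a \<in> carrier A" "a' \<in> carrier A'" "act h x = \<Sigma> a a' x"
      using O_eq[OF x(1) ai(1)] by blast
    then have "\<Sigma> a a' x = x" using S_fix[OF x(1) aa(1,2)] ai by simp
    then have "act h x = x" using aa by simp
    then show "h = \<one>\<^bsub>(Kstar :: 'k monoid)\<^esub>" using act_free h x one_K by simp
  qed
  have b9: "\<forall>q\<in>Orb ` P. \<forall>q'\<in>Orb ` P. prQ q = prQ q' \<longrightarrow> (\<exists>h\<in>carrier (Kstar :: 'k monoid). q' = actQ h q)"
  proof (intro ballI impI)
    fix q q' assume "q \<in> Orb ` P" "q' \<in> Orb ` P" and eq: "prQ q = prQ q'"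
    then obtain x y where x: "x \<in> P" "q = Orb x" and y: "y \<in> P" "q' = Orb y" by blast
    have "N #>\<^bsub>B\<^esub> fst (pr x) = N #>\<^bsub>B\<^esub> fst (pr y)" "N' #>\<^bsub>B'\<^esub> snd (pr x) = N' #>\<^bsub>B'\<^esub> snd (pr y)"
      using eq prQ_O x y by auto
    then obtain z where z: "z \<in> P" "Orb z = Orb y" "pr z = (fst (pr x), snd (pr x))"
      using adjust[OF y(1)] pr_in[OF x(1)] by blast
    then obtain h where h: "h \<in> carrier (Kstar :: 'k monoid)" "z = act h x"
      using act_trans[OF x(1) z(1)] by auto
    have "q' = actQ h q" using z h actQ_O x y by simp
    then show "\<exists>h\<in>carrier (Kstar :: 'k monoid). q' = actQ h q" using h by blast
  qed
  have b12: "\<forall>q11\<in>Orb ` P. \<forall>q12\<in>Orb ` P. \<forall>q21\<in>Orb ` P. \<forall>q22\<in>Orb ` P.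
        fst (prQ q11) = fst (prQ q12) \<and> fst (prQ q21) = fst (prQ q22) \<and>
        snd (prQ q11) = snd (prQ q21) \<and> snd (prQ q12) = snd (prQ q22) \<longrightarrow>
        add2Q (add1Q q11 q12) (add1Q q21 q22) = add1Q (add2Q q11 q21) (add2Q q12 q22)"
  proof (intro ballI impI)
    fix q11 q12 q21 q22 assume "q11 \<in> Orb ` P" "q12 \<in> Orb ` P" "q21 \<in> Orb ` P" "q22 \<in> Orb ` P"
      and C: "fst (prQ q11) = fst (prQ q12) \<and> fst (prQ q21) = fst (prQ q22) \<and>
        snd (prQ q11) = snd (prQ q21) \<and> snd (prQ q12) = snd (prQ q22)"
    then obtain y11 y12 y21 y22 where y: "y11 \<in> P" "y12 \<in> P" "y21 \<in> P" "y22 \<in> P"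
      and qy: "q11 = Orb y11" "q12 = Orb y12" "q21 = Orb y21" "q22 = Orb y22" by blast
    have C1: "N #>\<^bsub>B\<^esub> fst (pr y11) = N #>\<^bsub>B\<^esub> fst (pr y12)"
     and C2: "N #>\<^bsub>B\<^esub> fst (pr y21) = N #>\<^bsub>B\<^esub> fst (pr y22)"
     and C3: "N' #>\<^bsub>B'\<^esub> snd (pr y11) = N' #>\<^bsub>B'\<^esub> snd (pr y21)"
     and C4: "N' #>\<^bsub>B'\<^esub> snd (pr y12) = N' #>\<^bsub>B'\<^esub> snd (pr y22)"
      using C y qy prQ_O by auto
    obtain x12 where x12: "x12 \<in> P" "Orb x12 = Orb y12" "pr x12 = (fst (pr y11), snd (pr y12))"
      using adjust[OF y(2) _ _ C1] pr_in y by blast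
    obtain x21 where x21: "x21 \<in> P" "Orb x21 = Orb y21" "pr x21 = (fst (pr y21), snd (pr y11))"
      using adjust[OF y(3) _ _ _ C3] pr_in y by blast
    obtain x22 where x22: "x22 \<in> P" "Orb x22 = Orb y22" "pr x22 = (fst (pr y21), snd (pr y12))"
      using adjust[OF y(4) _ _ C2 C4] pr_in y by blast
    have e1: "fst (pr y11) = fst (pr x12)" "fst (pr x21) = fst (pr x22)"
      "snd (pr y11) = snd (pr x21)" "snd (pr x12) = snd (pr x22)" using x12 x21 x22 by auto
    have s1: "add1Q q11 q12 = Orb (add1 y11 x12)" using addQ_O y(1) x12 e1 qy by metis
    have s2: "add1Q q21 q22 = Orb (add1 x21 x22)" using addQ_O x21 x22 e1 qy by metis
    have s3: "add2Q q11 q21 = Orb (add2 y11 x21)" using add2Q_O y(1) x21 e1 qy by metis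
    have s4: "add2Q q12 q22 = Orb (add2 x12 x22)" using add2Q_O x12 x22 e1 qy by metis
    have p1: "add1 y11 x12 \<in> P" "snd (pr (add1 y11 x12)) = snd (pr y11) \<otimes>\<^bsub>B'\<^esub> snd (pr x12)"
      using add1_props[OF y(1) x12(1) e1(1)] by auto
    have p2: "add1 x21 x22 \<in> P" "snd (pr (add1 x21 x22)) = snd (pr x21) \<otimes>\<^bsub>B'\<^esub> snd (pr x22)"
      using add1_props[OF x21(1) x22(1) e1(2)] by auto
    have p3: "add2 y11 x21 \<in> P" "fst (pr (add2 y11 x21)) = fst (pr y11) \<otimes>\<^bsub>B\<^esub> fst (pr x21)"
      using add2_props[OF y(1) x21(1) e1(3)] by auto
    have p4: "add2 x12 x22 \<in> P" "fst (pr (add2 x12 x22)) = fst (pr x12) \<otimes>\<^bsub>B\<^esub> fst (pr x22)"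
      using add2_props[OF x12(1) x22(1) e1(4)] by auto
    have "snd (pr (add1 y11 x12)) = snd (pr (add1 x21 x22))" using p1 p2 x12 x21 x22 by simp
    then have "add2Q (add1Q q11 q12) (add1Q q21 q22) = Orb (add2 (add1 y11 x12) (add1 x21 x22))"
      using s1 s2 add2Q_O p1 p2 by simp
    also have "\<dots> = Orb (add1 (add2 y11 x21) (add2 x12 x22))"
      using compat[OF y(1) x12(1) x21(1) x22(1)] e1 by simp
    also have "\<dots> = add1Q (add2Q q11 q21) (add2Q q12 q22)"
    proof -
      have "fst (pr (add2 y11 x21)) = fst (pr (add2 x12 x22))" using p3 p4 x12 x21 x22 by simp
      then show ?thesis using s3 s4 addQ_O p3 p4 by simp
    qed
    finally show "add2Q (add1Q q11 q12) (add1Q q21 q22) = add1Q (add2Q q11 q21) (add2Q q12 q22)" .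
  qed
  have bx: "biext (B Mod N) (B' Mod N') (Kstar :: 'k monoid) (Orb ` P) prQ actQ add1Q add2Q"
    unfolding biext_def
    by (intro conjI; (rule b1 b2 b3 b4 b5 b6 b7 b8 b9 fib1 fib2 b12)?)
  show ?thesis
    apply (rule exI[of _ prQ], rule exI[of _ actQ], rule exI[of _ add1Q], rule exI[of _ add2Q])
    using bx prQ_O actQ_O addQ_O add2Q_O by blast
qed

end


theorem proposition3p4:
  fixes A :: "'a monoid" and B :: "'b monoid" and A' :: "'c monoid" and B' :: "'d monoid"
    and u :: "'a \<Rightarrow> 'b" and u' :: "'c \<Rightarrow> 'd"
    and P :: "'p set" and pr :: "'p \<Rightarrow> 'b \<times> 'd"
    and act :: "'k::field \<Rightarrow> 'p \<Rightarrow> 'p"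
    and add1 add2 :: "'p \<Rightarrow> 'p \<Rightarrow> 'p"
    and \<Sigma> :: "'a \<Rightarrow> 'c \<Rightarrow> 'p \<Rightarrow> 'p"
  assumes "comm_group A" and "comm_group B" and "comm_group A'" and "comm_group B'"
    and "u \<in> hom A B" and "u' \<in> hom A' B'"
    and "biext B B' (Kstar :: 'k monoid) P pr act add1 add2"
    and "linearization A A' B B' u u' (Kstar :: 'k monoid) P pr act add1 add2 \<Sigma>"
    and "inj_on u (carrier A)" and "inj_on u' (carrier A')"
  shows "\<exists>prQ actQ add1Q add2Q.
    biext (B Mod (u ` carrier A)) (B' Mod (u' ` carrier A')) (Kstar :: 'k monoid)
          (lin_orbit A A' \<Sigma> ` P) prQ actQ add1Q add2Q \<and>
    (\<forall>x\<in>P. prQ (lin_orbit A A' \<Sigma> x) =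
        ((u ` carrier A) #>\<^bsub>B\<^esub> fst (pr x), (u' ` carrier A') #>\<^bsub>B'\<^esub> snd (pr x))) \<and>
    (\<forall>c\<in>carrier (Kstar :: 'k monoid). \<forall>x\<in>P.
        actQ c (lin_orbit A A' \<Sigma> x) = lin_orbit A A' \<Sigma> (act c x)) \<and>
    (\<forall>x1\<in>P. \<forall>x2\<in>P. fst (pr x1) = fst (pr x2) \<longrightarrow>
        add1Q (lin_orbit A A' \<Sigma> x1) (lin_orbit A A' \<Sigma> x2) = lin_orbit A A' \<Sigma> (add1 x1 x2)) \<and>
    (\<forall>x1\<in>P. \<forall>x2\<in>P. snd (pr x1) = snd (pr x2) \<longrightarrow>
        add2Q (lin_orbit A A' \<Sigma> x1) (lin_orbit A A' \<Sigma> x2) = lin_orbit A A' \<Sigma> (add2 x1 x2))"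
  using qs.main[OF qs.intro[OF assms]] by blast

end
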